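(* Let $R=k[x_1,\dots,x_n]$ be graded by a monoid $P$, let $I\subset R$ be a $P$-homogeneous ideal, and let $\preceq$ be a monomial order. Let $G$ be a group acting on $R$ by permuting variables, acting monomially on $I$ up to degree $d$ and transitively on a set of variables $e_1,\dots,e_m$ (with $\deg(e_i)=\underline e_i\in P$). Let $Q\subseteq\mathrm{in}_{\preceq}(I)$ be a monomial ideal with generators of total degree at most $d$. Suppose: (1) $e_1$ is a nonzerodivisor in $R/Q$; (2) for all $g\in G$, $HS(R/Q,t)=HS(R/g(Q),t)$; (3) for all $D\in P$ there are natural numbers $a_1,\dots,a_m$ such that $\dim_k Q_{D+\sum_ia_i\underline e_i}=\dim_k I_{D+\sum_ia_i\underline e_i}$. Then $Q=\mathrm{in}_{\preceq}(I)$.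
   Context: $R$ is graded by a monoid $P$ such that every monomial is $P$-homogeneous, the $P$-grading refines the standard grading, and each graded piece is finite dimensional. For a $P$-graded module $N$, $HS(N,t)=\sum_{D\in P}\dim_k(N_D)t^D$. For $h\in R$, $\mathrm{mon}(h)$ is the set of monomials of $h$ with nonzero coefficient; $G$ acts monomially on $I$ up to degree $d$ if for every $h\in I$ of standard degree $\le d$ and every $g\in G$ there is $h'\in I$ with $\mathrm{mon}(h')=\mathrm{mon}(g(h))$. *)

theory Defs
  imports Complex_Main "HOL-Library.Poly_Mapping"
begin

abbreviation (input) pkeys where "pkeys \<equiv> Poly_Mapping.keys"
abbreviation (input) plookup where "plookup \<equiv> Poly_Mapping.lookup"

text \<open>Polynomial ring R = k[x_v : v in 'v] (with 'v a finite type of variables) is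
  represented as  ('v =>0 nat) =>0 'k : monomials are exponent vectors,
  polynomials are finitely supported coefficient functions on monomials.\<close>

type_synonym 'v monom = "'v \<Rightarrow>\<^sub>0 nat"
type_synonym ('v, 'k) mpoly = "'v monom \<Rightarrow>\<^sub>0 'k"

definition var_monom :: "'v \<Rightarrow> 'v monom" where
  "var_monom v = Poly_Mapping.single v 1"

definition monom_poly :: "'v monom \<Rightarrow> ('v, 'k::field) mpoly" where
  "monom_poly m = Poly_Mapping.single m 1"

definition tdeg :: "'v monom \<Rightarrow> nat" where
  "tdeg m = (\<Sum>v\<in>pkeys m. plookup m v)"

definition pm_scale :: "'k::field \<Rightarrow> ('v, 'k) mpoly \<Rightarrow> ('v, 'k) mpoly" where
  "pm_scale c f = Poly_Mapping.map (\<lambda>x. c * x) f"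

definition kdim :: "('v, 'k::field) mpoly set \<Rightarrow> nat" where
  "kdim V = vector_space.dim pm_scale V"

definition is_ideal :: "('v, 'k::field) mpoly set \<Rightarrow> bool" where
  "is_ideal J \<longleftrightarrow> 0 \<in> J \<and> (\<forall>a\<in>J. \<forall>b\<in>J. a + b \<in> J) \<and> (\<forall>a\<in>J. \<forall>r. r * a \<in> J)"

definition ideal_gen :: "('v, 'k::field) mpoly set \<Rightarrow> ('v, 'k) mpoly set" where
  "ideal_gen S = \<Inter>{J. is_ideal J \<and> S \<subseteq> J}"

definition P_grading :: "('v monom \<Rightarrow> 'p::comm_monoid_add) \<Rightarrow> bool" where
  "P_grading degP \<longleftrightarrow>
     degP 0 = 0 \<and> (\<forall>m m'. degP (m + m') = degP m + degP m') \<and>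
     (\<forall>m m'. degP m = degP m' \<longrightarrow> tdeg m = tdeg m') \<and>
     (\<forall>D. finite {m. degP m = D})"

definition hom_comp :: "('v monom \<Rightarrow> 'p) \<Rightarrow> 'p \<Rightarrow> ('v, 'k::field) mpoly \<Rightarrow> ('v, 'k) mpoly" where
  "hom_comp degP D f = (\<Sum>m\<in>{m\<in>pkeys f. degP m = D}. Poly_Mapping.single m (plookup f m))"

definition graded_piece :: "('v monom \<Rightarrow> 'p) \<Rightarrow> ('v, 'k::field) mpoly set \<Rightarrow> 'p \<Rightarrow> ('v, 'k) mpoly set" where
  "graded_piece degP J D = {f\<in>J. \<forall>m\<in>pkeys f. degP m = D}"

definition P_homogeneous :: "('v monom \<Rightarrow> 'p) \<Rightarrow> ('v, 'k::field) mpoly set \<Rightarrow> bool" where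
  "P_homogeneous degP J \<longleftrightarrow> (\<forall>f\<in>J. \<forall>D. hom_comp degP D f \<in> J)"

text \<open>Hilbert series HS(N,t) = sum_D dim_k(N_D) t^D, represented by its coefficient
  function D \<mapsto> dim_k(N_D).  For N = R/J (J a P-homogeneous ideal) we have
  (R/J)_D = R_D / J_D, so dim_k (R/J)_D = dim_k R_D - dim_k J_D.\<close>
definition HS_quot :: "('v monom \<Rightarrow> 'p) \<Rightarrow> ('v, 'k::field) mpoly set \<Rightarrow> 'p \<Rightarrow> nat" where
  "HS_quot degP J D = kdim (graded_piece degP (UNIV :: ('v, 'k) mpoly set) D) - kdim (graded_piece degP J D)"

definition monomial_order :: "('v monom \<Rightarrow> 'v monom \<Rightarrow> bool) \<Rightarrow> bool" where
  "monomial_order ord \<longleftrightarrow>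
     (\<forall>m. ord m m) \<and> (\<forall>m m'. ord m m' \<and> ord m' m \<longrightarrow> m = m') \<and>
     (\<forall>m m' m''. ord m m' \<and> ord m' m'' \<longrightarrow> ord m m'') \<and>
     (\<forall>m m'. ord m m' \<or> ord m' m) \<and>
     (\<forall>m. ord 0 m) \<and> (\<forall>m m' k. ord m m' \<longrightarrow> ord (m + k) (m' + k))"

definition lead_monom :: "('v monom \<Rightarrow> 'v monom \<Rightarrow> bool) \<Rightarrow> ('v, 'k::field) mpoly \<Rightarrow> 'v monom" where
  "lead_monom ord f = (THE m. m \<in> pkeys f \<and> (\<forall>m'\<in>pkeys f. ord m' m))"

definition init_ideal :: "('v monom \<Rightarrow> 'v monom \<Rightarrow> bool) \<Rightarrow> ('v, 'k::field) mpoly set \<Rightarrow> ('v, 'k) mpoly set" where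
  "init_ideal ord J = ideal_gen {monom_poly (lead_monom ord f) | f. f \<in> J \<and> f \<noteq> 0}"

text \<open>action of a permutation of the variables: x_v \<mapsto> x_(\<sigma> v)\<close>
definition monom_perm :: "('v::finite \<Rightarrow> 'v) \<Rightarrow> 'v monom \<Rightarrow> 'v monom" where
  "monom_perm \<sigma> m = Abs_poly_mapping (\<lambda>v. plookup m (inv \<sigma> v))"

definition poly_perm :: "('v::finite \<Rightarrow> 'v) \<Rightarrow> ('v, 'k::field) mpoly \<Rightarrow> ('v, 'k) mpoly" where
  "poly_perm \<sigma> f = (\<Sum>m\<in>pkeys f. Poly_Mapping.single (monom_perm \<sigma> m) (plookup f m))"

definition perm_group :: "('v \<Rightarrow> 'v) set \<Rightarrow> bool" where
  "perm_group G \<longleftrightarrow> id \<in> G \<and> (\<forall>g\<in>G. bij g) \<and> (\<forall>g\<in>G. \<forall>h\<in>G. g \<circ> h \<in> G) \<and> (\<forall>g\<in>G. inv g \<in> G)"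

definition acts_monomially :: "('v::finite \<Rightarrow> 'v) set \<Rightarrow> ('v, 'k::field) mpoly set \<Rightarrow> nat \<Rightarrow> bool" where
  "acts_monomially G J d \<longleftrightarrow>
     (\<forall>h\<in>J. (\<forall>m\<in>pkeys h. tdeg m \<le> d) \<longrightarrow>
        (\<forall>g\<in>G. \<exists>h'\<in>J. pkeys h' = pkeys (poly_perm g h)))"

definition nsm :: "nat \<Rightarrow> 'p::comm_monoid_add \<Rightarrow> 'p" where
  "nsm n x = ((+) x ^^ n) 0"

end

theory Submission
  imports Defs
begin
lemma lookup_pm_scale[simp]: "plookup (pm_scale c f) m = c * plookup f m"
  unfolding pm_scale_def by (simp add: Poly_Mapping.map.rep_eq when_def)

interpretation pmv: vector_space "pm_scale :: 'k::field \<Rightarrow> ('v, 'k) mpoly \<Rightarrow> ('v, 'k) mpoly"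
  by unfold_locales (auto intro!: poly_mapping_eqI simp: lookup_add algebra_simps)

lemma kdim_pmv: "kdim V = pmv.dim V"
  unfolding kdim_def by simp

lemma lookup_single_mult: "plookup (Poly_Mapping.single w c * (f :: ('v, 'k::field) mpoly)) (w + m) = c * plookup f m"
  by (simp add: lookup_mult lookup_single when_mult mult_when)

lemma lookup_single_mult0:
  assumes "\<not> (\<exists>m. k = w + m)"
  shows "plookup (Poly_Mapping.single w c * (f :: ('v, 'k::field) mpoly)) k = 0"
  proof -
  have "\<And>aa. (k = w + aa) = False" using assms by auto
  then show ?thesis by (simp add: lookup_mult lookup_single when_mult mult_when)
qed

lemma pm_scale_single: "pm_scale c f = Poly_Mapping.single 0 c * (f :: ('v, 'k::field) mpoly)"
  by (rule poly_mapping_eqI) (metis add_0 lookup_pm_scale lookup_single_mult)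

lemma poly_expand: "f = (\<Sum>m\<in>pkeys f. Poly_Mapping.single m (plookup f m))"
  by (rule poly_mapping_eqI) (auto simp add: lookup_sum lookup_single when_def in_keys_iff)

definition mons :: "'v monom set \<Rightarrow> 'v monom set" where
  "mons T = {m. \<exists>t\<in>T. \<exists>k. m = t + k}"

lemma mons_add: "m \<in> mons T \<Longrightarrow> m + k \<in> mons T"
proof -
  assume "m \<in> mons T"
  then obtain t k' where "t \<in> T" "m = t + k'" unfolding mons_def by auto
  then have "m + k = t + (k' + k)" by (simp add: add.assoc)
  then show ?thesis using \<open>t \<in> T\<close> unfolding mons_def by blast
qed

lemma mons_self: "t \<in> T \<Longrightarrow> t \<in> mons T"
proof -
  assume "t \<in> T"
  moreover have "t = t + 0" by simp
  ultimately show ?thesis unfolding mons_def by blast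
qed

lemma ideal_sum:
  assumes "is_ideal J" "finite A" "\<And>a. a \<in> A \<Longrightarrow> f a \<in> J"
  shows "sum f A \<in> J"
  using assms(2,3)
proof (induction A rule: finite_induct)
  case empty then show ?case using assms(1) unfolding is_ideal_def by simp
next
  case (insert x F) then show ?case using assms(1) unfolding is_ideal_def by simp
qed

lemma keys_monom_poly[simp]: "pkeys (monom_poly t :: ('v, 'k::field) mpoly) = {t}"
  unfolding monom_poly_def by simp

lemma ideal_gen_monomial:
  "ideal_gen (monom_poly ` T :: ('v, 'k::field) mpoly set) = {f. pkeys f \<subseteq> mons T}"
proof
  let ?M = "{f :: ('v, 'k) mpoly. pkeys f \<subseteq> mons T}"
  have "is_ideal ?M"
    unfolding is_ideal_def
  proof (intro conjI ballI allI)
    show "0 \<in> ?M" by simp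
    fix a b assume "a \<in> ?M" "b \<in> ?M"
    then show "a + b \<in> ?M" using keys_add[of a b] by auto
  next
    fix a r assume a: "a \<in> ?M"
    have "pkeys (r * a) \<subseteq> mons T"
    proof
      fix x assume "x \<in> pkeys (r * a)"
      then obtain u v where "x = u + v" "v \<in> pkeys a" using keys_mult[of r a] by blast
      then show "x \<in> mons T" using a mons_add[of v T u] by (auto simp: add.commute)
    qed
    then show "r * a \<in> ?M" by simp
  qed
  moreover have "monom_poly ` T \<subseteq> ?M" using mons_self by auto
  ultimately show "ideal_gen (monom_poly ` T) \<subseteq> ?M"
    unfolding ideal_gen_def by blast
next
  show "{f. pkeys f \<subseteq> mons T} \<subseteq> ideal_gen (monom_poly ` T :: ('v, 'k::field) mpoly set)"
  proof
    fix f :: "('v, 'k) mpoly" assume f: "f \<in> {f. pkeys f \<subseteq> mons T}"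
    show "f \<in> ideal_gen (monom_poly ` T)"
      unfolding ideal_gen_def
    proof
      fix J :: "('v, 'k) mpoly set" assume J: "J \<in> {J. is_ideal J \<and> monom_poly ` T \<subseteq> J}"
      have "(\<Sum>m\<in>pkeys f. Poly_Mapping.single m (plookup f m)) \<in> J"
      proof (rule ideal_sum)
        show "is_ideal J" using J by simp
        show "finite (pkeys f)" by simp
        fix m assume "m \<in> pkeys f"
        then obtain t k where tk: "t \<in> T" "m = t + k" using f unfolding mons_def by auto
        have "Poly_Mapping.single m (plookup f m) = Poly_Mapping.single k (plookup f m) * monom_poly t"
          unfolding monom_poly_def by (simp add: mult_single tk add.commute)
        moreover have "monom_poly t \<in> J" using J tk by auto
        ultimately show "Poly_Mapping.single m (plookup f m) \<in> J"
          using J unfolding is_ideal_def by auto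
      qed
      then show "f \<in> J" using poly_expand[of f] by simp
    qed
  qed
qed

definition lin_ord :: "('a \<Rightarrow> 'a \<Rightarrow> bool) \<Rightarrow> bool" where
  "lin_ord ord \<longleftrightarrow> (\<forall>m. ord m m) \<and> (\<forall>m m'. ord m m' \<and> ord m' m \<longrightarrow> m = m') \<and>
     (\<forall>m m' m''. ord m m' \<and> ord m' m'' \<longrightarrow> ord m m'') \<and> (\<forall>m m'. ord m m' \<or> ord m' m)"

lemma lin_refl: "lin_ord ord \<Longrightarrow> ord m m" unfolding lin_ord_def by blast
lemma lin_antisym: "lin_ord ord \<Longrightarrow> ord m m' \<Longrightarrow> ord m' m \<Longrightarrow> m = m'" unfolding lin_ord_def by blast
lemma lin_trans: "lin_ord ord \<Longrightarrow> ord m m' \<Longrightarrow> ord m' m'' \<Longrightarrow> ord m m''" unfolding lin_ord_def by blast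
lemma lin_total: "lin_ord ord \<Longrightarrow> \<not> ord m m' \<Longrightarrow> ord m' m" unfolding lin_ord_def by blast

lemma monomial_order_lin: "monomial_order ord \<Longrightarrow> lin_ord ord"
  unfolding monomial_order_def lin_ord_def by blast

lemma lin_ord_max:
  assumes "lin_ord ord" "finite X" "X \<noteq> {}"
  shows "\<exists>x\<in>X. \<forall>y\<in>X. ord y x"
  using assms(2,3)
proof (induction X rule: finite_ne_induct)
  case (singleton x) then show ?case using lin_refl[OF assms(1)] by auto
next
  case (insert x F)
  then obtain z where z: "z \<in> F" "\<forall>y\<in>F. ord y z" by blast
  show ?case
  proof (cases "ord x z")
    case True then show ?thesis using z by auto
  next
    case False
    then have "ord z x" using lin_total[OF assms(1)] by blast
    then show ?thesis using z lin_trans[OF assms(1)] lin_refl[OF assms(1)] by blast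
  qed
qed

lemma lead_unique:
  assumes "lin_ord ord" "u \<in> pkeys f" "\<forall>m\<in>pkeys f. ord m u"
  shows "lead_monom ord f = u"
  unfolding lead_monom_def
proof (rule the_equality)
  show "u \<in> pkeys f \<and> (\<forall>m'\<in>pkeys f. ord m' u)" using assms by blast
  fix m assume "m \<in> pkeys f \<and> (\<forall>m'\<in>pkeys f. ord m' m)"
  then show "m = u" using assms lin_antisym[OF assms(1)] by blast
qed

lemma lead_props:
  assumes "lin_ord ord" "f \<noteq> 0"
  shows "lead_monom ord f \<in> pkeys f" "\<forall>m\<in>pkeys f. ord m (lead_monom ord f)"
proof -
  obtain u where u: "u \<in> pkeys f" "\<forall>m\<in>pkeys f. ord m u"
    using lin_ord_max[OF assms(1), of "pkeys f"] assms(2) by auto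
  then have "lead_monom ord f = u" using lead_unique assms(1) by blast
  then show "lead_monom ord f \<in> pkeys f" "\<forall>m\<in>pkeys f. ord m (lead_monom ord f)"
    using u by auto
qed
lemma kdim_lead:
  fixes V :: "('v, 'k::field) mpoly set"
  assumes lin: "lin_ord ord" and finA: "finite A" and VA: "\<And>f. f \<in> V \<Longrightarrow> pkeys f \<subseteq> A"
    and sub: "pmv.subspace V"
  shows "kdim V = card (lead_monom ord ` (V - {0}))"
proof -
  define L where "L = lead_monom ord ` (V - {0})"
  define F where "F = (\<lambda>l. SOME f. f \<in> V - {0} \<and> lead_monom ord f = l)"
  have F: "F l \<in> V" "F l \<noteq> 0" "lead_monom ord (F l) = l" if "l \<in> L" for l
  proof -
    have "\<exists>f. f \<in> V - {0} \<and> lead_monom ord f = l" using that unfolding L_def by auto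
    then have "F l \<in> V - {0} \<and> lead_monom ord (F l) = l" unfolding F_def by (rule someI_ex)
    then show "F l \<in> V" "F l \<noteq> 0" "lead_monom ord (F l) = l" by auto
  qed
  have injF: "inj_on F L" by (rule inj_onI) (metis F(3))
  define B where "B = F ` L"
  have BV: "B \<subseteq> V" using F unfolding B_def by auto
  have finL: "finite L"
  proof -
    have "L \<subseteq> A" unfolding L_def using lead_props(1)[OF lin] VA by blast
    then show ?thesis using finA finite_subset by blast
  qed
  have indep: "pmv.independent B"
    unfolding pmv.independent_explicit_module
  proof (intro allI impI)
    fix t u v
    assume t: "finite t" "t \<subseteq> B" and sum0: "(\<Sum>v\<in>t. pm_scale (u v) v) = 0" and vt: "v \<in> t"
    show "u v = 0"
    proof (rule ccontr)
      assume "u v \<noteq> 0"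
      define t' where "t' = {w\<in>t. u w \<noteq> 0}"
      have "finite (lead_monom ord ` t')" "lead_monom ord ` t' \<noteq> {}"
        using t vt \<open>u v \<noteq> 0\<close> unfolding t'_def by auto
      then obtain l0 where l0: "l0 \<in> lead_monom ord ` t'" "\<forall>y\<in>lead_monom ord ` t'. ord y l0"
        using lin_ord_max[OF lin] by blast
      then obtain w0 where w0: "w0 \<in> t'" "lead_monom ord w0 = l0" by auto
      have w0B: "w0 \<in> B" using w0 t unfolding t'_def by auto
      then have w0nz: "w0 \<noteq> 0" using F unfolding B_def by auto
      have other: "plookup w l0 = 0" if "w \<in> t" "w \<noteq> w0" "u w \<noteq> 0" for w
      proof (rule ccontr)
        assume "plookup w l0 \<noteq> 0"
        then have l0k: "l0 \<in> pkeys w" by (simp add: in_keys_iff)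
        have wB: "w \<in> B" using that t by auto
        then have wnz: "w \<noteq> 0" using F unfolding B_def by auto
        have "ord l0 (lead_monom ord w)" using lead_props(2)[OF lin wnz] l0k by blast
        moreover have "ord (lead_monom ord w) l0" using l0(2) that unfolding t'_def by auto
        ultimately have "lead_monom ord w = lead_monom ord w0" using lin_antisym[OF lin] w0 by blast
        moreover obtain a b where "a \<in> L" "w = F a" "b \<in> L" "w0 = F b" using wB w0B unfolding B_def by auto
        ultimately show False using F(3) \<open>w \<noteq> w0\<close> by auto
      qed
      have "plookup (\<Sum>v\<in>t. pm_scale (u v) v) l0 = (\<Sum>w\<in>t. u w * plookup w l0)"
        by (simp add: lookup_sum)
      also have "\<dots> = (\<Sum>w\<in>t. if w = w0 then u w0 * plookup w0 l0 else 0)"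
        using other by (intro sum.cong) auto
      also have "\<dots> = u w0 * plookup w0 l0" using w0 t unfolding t'_def by simp
      finally have "u w0 * plookup w0 l0 = 0" using sum0 by simp
      moreover have "u w0 \<noteq> 0" using w0 unfolding t'_def by auto
      moreover have "plookup w0 l0 \<noteq> 0"
        using lead_props(1)[OF lin w0nz] w0(2) by (simp add: in_keys_iff)
      ultimately show False by simp
    qed
  qed
  have spanV: "f \<in> pmv.span B" if "f \<in> V" for f
    using that
  proof (induction f rule: measure_induct_rule[where f = "\<lambda>f. card {m\<in>A. ord m (lead_monom ord f)}"])
    case (less f)
    show ?case
    proof (cases "f = 0")
      case True then show ?thesis by (simp add: pmv.span_zero)
    next
      case False
      define l where "l = lead_monom ord f"
      have lL: "l \<in> L" unfolding L_def l_def using less.prems False by auto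
      define c where "c = plookup f l / plookup (F l) l"
      have Fl0: "plookup (F l) l \<noteq> 0"
        using lead_props(1)[OF lin F(2)[OF lL]] F(3)[OF lL] by (simp add: in_keys_iff)
      define f' where "f' = f - pm_scale c (F l)"
      have f'V: "f' \<in> V" unfolding f'_def
        using pmv.subspace_diff[OF sub less.prems pmv.subspace_scale[OF sub F(1)[OF lL]]] .
      have f'l: "plookup f' l = 0" unfolding f'_def c_def using Fl0 by (simp add: lookup_minus)
      have f'keys: "ord m l" if "m \<in> pkeys f'" for m
      proof -
        have "m \<in> pkeys f \<or> m \<in> pkeys (F l)"
          using that unfolding f'_def by (auto simp: in_keys_iff lookup_minus)
        then show ?thesis
          using lead_props(2)[OF lin False] lead_props(2)[OF lin F(2)[OF lL]] F(3)[OF lL]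
          unfolding l_def by auto
      qed
      have "f' \<in> pmv.span B"
      proof (cases "f' = 0")
        case True then show ?thesis by (simp add: pmv.span_zero)
      next
        case f'nz: False
        have lf'1: "ord (lead_monom ord f') l" using f'keys lead_props(1)[OF lin f'nz] by blast
        have lf'2: "lead_monom ord f' \<noteq> l" using lead_props(1)[OF lin f'nz] f'l by (auto simp: in_keys_iff)
        have lA: "l \<in> A" using VA[OF less.prems] lead_props(1)[OF lin False] unfolding l_def by auto
        have sub1: "{m\<in>A. ord m (lead_monom ord f')} \<subseteq> {m\<in>A. ord m l}"
          using lf'1 lin_trans[OF lin] by blast
        have "l \<notin> {m\<in>A. ord m (lead_monom ord f')}"
          using lf'1 lf'2 lin_antisym[OF lin] by blast
        moreover have "l \<in> {m\<in>A. ord m l}" using lA lin_refl[OF lin] by blast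
        ultimately have "card {m\<in>A. ord m (lead_monom ord f')} < card {m\<in>A. ord m l}"
          using sub1 finA by (intro psubset_card_mono) auto
        then show ?thesis using less.IH f'V unfolding l_def by blast
      qed
      moreover have "F l \<in> pmv.span B" using lL unfolding B_def by (intro pmv.span_base) auto
      ultimately have "f' + pm_scale c (F l) \<in> pmv.span B"
        by (intro pmv.span_add pmv.span_scale)
      then show ?thesis unfolding f'_def by simp
    qed
  qed
  have "pmv.span B = pmv.span V"
  proof -
    have "pmv.span B \<subseteq> V" using BV sub pmv.span_minimal by blast
    moreover have "V \<subseteq> pmv.span B" using spanV by blast
    ultimately show ?thesis using sub by (metis pmv.span_eq_iff subset_antisym)
  qed
  then have "kdim V = card B" unfolding kdim_pmv using pmv.dim_eq_card indep by blast
  also have "\<dots> = card L" unfolding B_def using card_image[OF injF] .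
  finally show ?thesis unfolding L_def .
qed

lemma keys_pm_scale: "pkeys (pm_scale c f) \<subseteq> pkeys f"
  by (auto simp: in_keys_iff)

lemma subspace_keys: "pmv.subspace {f :: ('v, 'k::field) mpoly. pkeys f \<subseteq> A}"
  unfolding pmv.subspace_def using keys_add keys_pm_scale by fastforce

lemma kdim_keys:
  fixes ord :: "'v monom \<Rightarrow> 'v monom \<Rightarrow> bool" and A :: "'v monom set"
  assumes lin: "lin_ord ord" and finA: "finite A"
  shows "kdim {f :: ('v, 'k::field) mpoly. pkeys f \<subseteq> A} = card A"
proof -
  have L: "lead_monom ord ` ({f :: ('v, 'k) mpoly. pkeys f \<subseteq> A} - {0}) = A"
  proof
    show "lead_monom ord ` ({f :: ('v, 'k) mpoly. pkeys f \<subseteq> A} - {0}) \<subseteq> A"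
      using lead_props(1)[OF lin] by blast
    show "A \<subseteq> lead_monom ord ` ({f :: ('v, 'k) mpoly. pkeys f \<subseteq> A} - {0})"
    proof
      fix a assume "a \<in> A"
      moreover have "lead_monom ord (monom_poly a :: ('v, 'k) mpoly) = a"
        by (rule lead_unique[OF lin]) (auto simp: lin_refl[OF lin])
      moreover have "(monom_poly a :: ('v, 'k) mpoly) \<noteq> 0"
        using keys_monom_poly[of a] by (metis empty_not_insert keys_zero)
      ultimately show "a \<in> lead_monom ord ` ({f :: ('v, 'k) mpoly. pkeys f \<subseteq> A} - {0})"
        by (intro image_eqI[of _ _ "monom_poly a"]) auto
    qed
  qed
  have "kdim {f :: ('v, 'k) mpoly. pkeys f \<subseteq> A} = card (lead_monom ord ` ({f :: ('v, 'k) mpoly. pkeys f \<subseteq> A} - {0}))"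
    by (rule kdim_lead[OF lin finA _ subspace_keys]) simp
  then show ?thesis using L by simp
qed

lemma graded_piece_monomial:
  "graded_piece degP (ideal_gen (monom_poly ` T) :: ('v, 'k::field) mpoly set) D
     = {f. pkeys f \<subseteq> mons T \<inter> {m. degP m = D}}"
  unfolding graded_piece_def ideal_gen_monomial by auto

lemma graded_piece_UNIV:
  "graded_piece degP (UNIV :: ('v, 'k::field) mpoly set) D = {f. pkeys f \<subseteq> {m. degP m = D}}"
  unfolding graded_piece_def by auto

lemma lookup_hom_comp:
  "plookup (hom_comp degP D f) k = (if degP k = D then plookup f k else 0)"
  unfolding hom_comp_def by (auto simp: lookup_sum lookup_single when_def in_keys_iff)

lemma keys_hom_comp: "pkeys (hom_comp degP D f) = {m\<in>pkeys f. degP m = D}"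
  by (auto simp: in_keys_iff lookup_hom_comp split: if_splits)

lemma keys_single_mult: "pkeys (Poly_Mapping.single w 1 * (f :: ('v, 'k::field) mpoly)) = (+) w ` pkeys f"
proof
  show "pkeys (Poly_Mapping.single w 1 * f) \<subseteq> (+) w ` pkeys f"
  proof
    fix k assume k: "k \<in> pkeys (Poly_Mapping.single w 1 * f)"
    show "k \<in> (+) w ` pkeys f"
    proof (cases "\<exists>m. k = w + m")
      case True
      then obtain m where "k = w + m" by blast
      then show ?thesis using k lookup_single_mult[of w 1 f m] by (auto simp: in_keys_iff)
    next
      case False then show ?thesis using k lookup_single_mult0[OF False] by (auto simp: in_keys_iff)
    qed
  qed
  show "(+) w ` pkeys f \<subseteq> pkeys (Poly_Mapping.single w 1 * f)"
    using lookup_single_mult[of w 1 f] by (auto simp: in_keys_iff)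
qed

lemma mo_compat: "monomial_order ord \<Longrightarrow> ord m m' \<Longrightarrow> ord (m + k) (m' + k)"
  unfolding monomial_order_def by (elim conjE) (rule mp, erule allE, erule allE, erule allE, assumption, assumption)

lemma lead_single_mult:
  assumes mo: "monomial_order ord" and f: "f \<noteq> 0"
  shows "lead_monom ord (Poly_Mapping.single w 1 * (f :: ('v, 'k::field) mpoly)) = w + lead_monom ord f"
proof -
  have lin: "lin_ord ord" using monomial_order_lin[OF mo] .
  have comp: "ord (m + k) (m' + k)" if "ord m m'" for m m' k
    using mo_compat[OF mo that] .
  show ?thesis
  proof (rule lead_unique[OF lin])
    show "w + lead_monom ord f \<in> pkeys (Poly_Mapping.single w 1 * f)"
      unfolding keys_single_mult using lead_props(1)[OF lin f] by blast
    show "\<forall>m\<in>pkeys (Poly_Mapping.single w 1 * f). ord m (w + lead_monom ord f)"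
    proof
      fix m assume "m \<in> pkeys (Poly_Mapping.single w 1 * f)"
      then obtain m0 where "m0 \<in> pkeys f" "m = w + m0" unfolding keys_single_mult by blast
      then have "ord (m0 + w) (lead_monom ord f + w)" using lead_props(2)[OF lin f] comp by blast
      then show "ord m (w + lead_monom ord f)" using \<open>m = w + m0\<close> by (simp add: add.commute)
    qed
  qed
qed

lemma lift_lead:
  fixes I :: "('v, 'k::field) mpoly set"
  assumes mo: "monomial_order ord" and Iid: "is_ideal I" and Ih: "P_homogeneous degP I"
    and u: "u \<in> mons (lead_monom ord ` (I - {0}))"
  shows "\<exists>h\<in>I. h \<noteq> 0 \<and> lead_monom ord h = u \<and> (\<forall>m\<in>pkeys h. degP m = degP u)"
proof -
  have lin: "lin_ord ord" using monomial_order_lin[OF mo] .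
  obtain f k where f: "f \<in> I" "f \<noteq> 0" "u = lead_monom ord f + k"
    using u unfolding mons_def by auto
  define f' where "f' = Poly_Mapping.single k 1 * f"
  have f'I: "f' \<in> I" using Iid f unfolding is_ideal_def f'_def by blast
  have lf': "lead_monom ord f' = u" unfolding f'_def using lead_single_mult[OF mo f(2)] f(3)
    by (simp add: add.commute)
  have f'nz: "f' \<noteq> 0"
  proof
    assume "f' = 0"
    then have "(+) k ` pkeys f = {}" using keys_single_mult[of k f] unfolding f'_def by simp
    then show False using f(2) by simp
  qed
  define h where "h = hom_comp degP (degP u) f'"
  have hI: "h \<in> I" using Ih f'I unfolding P_homogeneous_def h_def by blast
  have uh: "u \<in> pkeys h" unfolding h_def keys_hom_comp using lead_props(1)[OF lin f'nz] lf' by simp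
  have hnz: "h \<noteq> 0" using uh by auto
  have "lead_monom ord h = u"
    by (rule lead_unique[OF lin uh]) (use lead_props(2)[OF lin f'nz] lf' in \<open>auto simp: h_def keys_hom_comp\<close>)
  moreover have "\<forall>m\<in>pkeys h. degP m = degP u" unfolding h_def keys_hom_comp by simp
  ultimately show ?thesis using hI hnz by blast
qed

lemma ideal_add: "is_ideal I \<Longrightarrow> a \<in> I \<Longrightarrow> b \<in> I \<Longrightarrow> a + b \<in> I"
  unfolding is_ideal_def by blast
lemma ideal_mult: "is_ideal I \<Longrightarrow> a \<in> I \<Longrightarrow> r * a \<in> I"
  unfolding is_ideal_def by blast
lemma ideal_0: "is_ideal I \<Longrightarrow> 0 \<in> I"
  unfolding is_ideal_def by blast

lemma kdim_ideal:
  fixes I :: "('v, 'k::field) mpoly set"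
  assumes gr: "P_grading degP" and mo: "monomial_order ord" and Iid: "is_ideal I"
    and Ih: "P_homogeneous degP I"
  shows "kdim (graded_piece degP I D) = card (mons (lead_monom ord ` (I - {0})) \<inter> {m. degP m = D})"
proof -
  have lin: "lin_ord ord" using monomial_order_lin[OF mo] .
  have fin: "finite {m. degP m = D}" using gr unfolding P_grading_def by blast
  have sub: "pmv.subspace (graded_piece degP I D)"
  proof (rule pmv.subspaceI)
    show "0 \<in> graded_piece degP I D" using ideal_0[OF Iid] unfolding graded_piece_def by simp
    fix x y assume x: "x \<in> graded_piece degP I D" and y: "y \<in> graded_piece degP I D"
    have "x + y \<in> I" using x y ideal_add[OF Iid] unfolding graded_piece_def by blast
    moreover have "\<forall>m\<in>pkeys (x + y). degP m = D"
      using x y keys_add[of x y] unfolding graded_piece_def by blast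
    ultimately show "x + y \<in> graded_piece degP I D" unfolding graded_piece_def by blast
  next
    fix c x assume x: "x \<in> graded_piece degP I D"
    then have "pm_scale c x \<in> I" using ideal_mult[OF Iid] unfolding graded_piece_def pm_scale_single by blast
    moreover have "\<forall>m\<in>pkeys (pm_scale c x). degP m = D"
      using x keys_pm_scale[of c x] unfolding graded_piece_def by blast
    ultimately show "pm_scale c x \<in> graded_piece degP I D" unfolding graded_piece_def by blast
  qed
  have "lead_monom ord ` (graded_piece degP I D - {0}) = mons (lead_monom ord ` (I - {0})) \<inter> {m. degP m = D}"
  proof
    show "lead_monom ord ` (graded_piece degP I D - {0}) \<subseteq> mons (lead_monom ord ` (I - {0})) \<inter> {m. degP m = D}"
    proof
      fix u assume "u \<in> lead_monom ord ` (graded_piece degP I D - {0})"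
      then obtain h where h: "h \<in> graded_piece degP I D" "h \<noteq> 0" "u = lead_monom ord h" by blast
      have "u \<in> pkeys h" using lead_props(1)[OF lin h(2)] h(3) by simp
      then have dD: "degP u = D" using h(1) unfolding graded_piece_def by simp
      have "h \<in> I - {0}" using h unfolding graded_piece_def by simp
      then have "u \<in> lead_monom ord ` (I - {0})" using h(3) by (rule rev_image_eqI)
      then have "u \<in> mons (lead_monom ord ` (I - {0}))" by (rule mons_self)
      then show "u \<in> mons (lead_monom ord ` (I - {0})) \<inter> {m. degP m = D}"
        using dD by simp
    qed
    show "mons (lead_monom ord ` (I - {0})) \<inter> {m. degP m = D} \<subseteq> lead_monom ord ` (graded_piece degP I D - {0})"
    proof
      fix u assume u: "u \<in> mons (lead_monom ord ` (I - {0})) \<inter> {m. degP m = D}"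
      then obtain h where h: "h \<in> I" "h \<noteq> 0" "lead_monom ord h = u" "\<forall>m\<in>pkeys h. degP m = degP u"
        using lift_lead[OF mo Iid Ih] by blast
      have "degP u = D" using u by simp
      then have "h \<in> graded_piece degP I D - {0}" using h(1,2,4) unfolding graded_piece_def by simp
      then show "u \<in> lead_monom ord ` (graded_piece degP I D - {0})"
        using h(3) by (rule rev_image_eqI[OF _ sym])
    qed
  qed
  moreover have "kdim (graded_piece degP I D) = card (lead_monom ord ` (graded_piece degP I D - {0}))"
    by (rule kdim_lead[OF lin fin _ sub]) (auto simp: graded_piece_def)
  ultimately show ?thesis by simp
qed

lemma lookup_monom_perm: "plookup (monom_perm \<sigma> m) v = plookup m (inv \<sigma> v)"
  unfolding monom_perm_def by (subst Abs_poly_mapping_inverse) auto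

lemma monom_perm_add: "monom_perm \<sigma> (a + b) = monom_perm \<sigma> a + monom_perm \<sigma> b"
  by (rule poly_mapping_eqI) (simp add: lookup_monom_perm lookup_add)

lemma monom_perm_inv1:
  assumes "bij \<sigma>" shows "monom_perm \<sigma> (monom_perm (inv \<sigma>) m) = m"
proof (rule poly_mapping_eqI)
  fix v
  have "inv (inv \<sigma>) = \<sigma>" using assms by (rule inv_inv_eq)
  moreover have "\<sigma> (inv \<sigma> v) = v" using assms by (simp add: bij_is_surj surj_f_inv_f)
  ultimately show "plookup (monom_perm \<sigma> (monom_perm (inv \<sigma>) m)) v = plookup m v"
    by (simp add: lookup_monom_perm)
qed

lemma monom_perm_inv2:
  assumes "bij \<sigma>" shows "monom_perm (inv \<sigma>) (monom_perm \<sigma> m) = m"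
proof (rule poly_mapping_eqI)
  fix v
  have "inv \<sigma> (\<sigma> v) = v" using assms by (simp add: bij_is_inj inv_f_f)
  then show "plookup (monom_perm (inv \<sigma>) (monom_perm \<sigma> m)) v = plookup m v"
    by (simp add: lookup_monom_perm inv_inv_eq[OF assms])
qed

lemma monom_perm_var:
  assumes "bij \<sigma>" shows "monom_perm \<sigma> (var_monom v) = var_monom (\<sigma> v)"
proof (rule poly_mapping_eqI)
  fix w
  have "(v = inv \<sigma> w) = (\<sigma> v = w)" by (rule bij_inv_eq_iff[OF assms])
  then show "plookup (monom_perm \<sigma> (var_monom v)) w = plookup (var_monom (\<sigma> v)) w"
    by (simp add: lookup_monom_perm var_monom_def lookup_single when_def)
qed

lemma lookup_poly_perm:
  assumes "bij \<sigma>"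
  shows "plookup (poly_perm \<sigma> f) m' = plookup f (monom_perm (inv \<sigma>) m')"
proof -
  have eq: "(monom_perm \<sigma> m = m') = (m = monom_perm (inv \<sigma>) m')" for m
  proof
    assume "monom_perm \<sigma> m = m'"
    then show "m = monom_perm (inv \<sigma>) m'" using monom_perm_inv2[OF assms, of m] by simp
  next
    assume "m = monom_perm (inv \<sigma>) m'"
    then show "monom_perm \<sigma> m = m'" using monom_perm_inv1[OF assms, of m'] by simp
  qed
  have "plookup (poly_perm \<sigma> f) m' = (\<Sum>m\<in>pkeys f. if m = monom_perm (inv \<sigma>) m' then plookup f m else 0)"
    unfolding poly_perm_def lookup_sum by (intro sum.cong) (auto simp: lookup_single when_def eq)
  also have "\<dots> = plookup f (monom_perm (inv \<sigma>) m')"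
    by (simp add: in_keys_iff)
  finally show ?thesis .
qed

lemma keys_poly_perm:
  assumes "bij \<sigma>"
  shows "pkeys (poly_perm \<sigma> f) = monom_perm \<sigma> ` pkeys f"
proof
  show "pkeys (poly_perm \<sigma> f) \<subseteq> monom_perm \<sigma> ` pkeys f"
  proof
    fix m' assume "m' \<in> pkeys (poly_perm \<sigma> f)"
    then have "monom_perm (inv \<sigma>) m' \<in> pkeys f" by (simp add: in_keys_iff lookup_poly_perm[OF assms])
    then show "m' \<in> monom_perm \<sigma> ` pkeys f" using monom_perm_inv1[OF assms, of m'] by (rule rev_image_eqI[OF _ sym])
  qed
  show "monom_perm \<sigma> ` pkeys f \<subseteq> pkeys (poly_perm \<sigma> f)"
    using monom_perm_inv2[OF assms] by (auto simp: in_keys_iff lookup_poly_perm[OF assms])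
qed

lemma poly_perm_inv:
  assumes "bij \<sigma>" shows "poly_perm \<sigma> (poly_perm (inv \<sigma>) f) = f"
proof (rule poly_mapping_eqI)
  fix m
  have b: "bij (inv \<sigma>)" using assms by (rule bij_imp_bij_inv)
  show "plookup (poly_perm \<sigma> (poly_perm (inv \<sigma>) f)) m = plookup f m"
    by (simp add: lookup_poly_perm[OF assms] lookup_poly_perm[OF b] inv_inv_eq[OF assms] monom_perm_inv1[OF assms])
qed

lemma poly_perm_image_monomial:
  assumes g: "bij g"
  shows "poly_perm g ` (ideal_gen (monom_poly ` S) :: ('v::finite, 'k::field) mpoly set)
     = {f. pkeys f \<subseteq> {m. monom_perm (inv g) m \<in> mons S}}"
proof
  show "poly_perm g ` (ideal_gen (monom_poly ` S) :: ('v, 'k) mpoly set) \<subseteq> {f. pkeys f \<subseteq> {m. monom_perm (inv g) m \<in> mons S}}"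
  proof
    fix f assume "f \<in> poly_perm g ` (ideal_gen (monom_poly ` S) :: ('v, 'k) mpoly set)"
    then obtain q :: "('v, 'k) mpoly" where q: "q \<in> ideal_gen (monom_poly ` S)" "f = poly_perm g q"
      by (rule imageE) simp
    from q(1) have q1: "pkeys q \<subseteq> mons S" unfolding ideal_gen_monomial by simp
    have "monom_perm (inv g) m \<in> mons S" if "m \<in> pkeys f" for m
    proof -
      have "m \<in> monom_perm g ` pkeys q" using that unfolding q(2) keys_poly_perm[OF g] .
      then obtain m0 where "m0 \<in> pkeys q" "m = monom_perm g m0" by blast
      then show ?thesis using q1 monom_perm_inv2[OF g, of m0] by auto
    qed
    then show "f \<in> {f. pkeys f \<subseteq> {m. monom_perm (inv g) m \<in> mons S}}" by blast
  qed
  show "{f. pkeys f \<subseteq> {m. monom_perm (inv g) m \<in> mons S}} \<subseteq> poly_perm g ` (ideal_gen (monom_poly ` S) :: ('v, 'k) mpoly set)"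
  proof
    fix f :: "('v, 'k) mpoly" assume f: "f \<in> {f. pkeys f \<subseteq> {m. monom_perm (inv g) m \<in> mons S}}"
    have b: "bij (inv g)" using g by (rule bij_imp_bij_inv)
    have "poly_perm (inv g) f \<in> ideal_gen (monom_poly ` S)"
      unfolding ideal_gen_monomial using f by (auto simp: keys_poly_perm[OF b])
    then show "f \<in> poly_perm g ` ideal_gen (monom_poly ` S)"
      using poly_perm_inv[OF g, of f] by (rule rev_image_eqI[OF _ sym])
  qed
qed

definition perm_ord :: "('v::finite \<Rightarrow> 'v) \<Rightarrow> ('v monom \<Rightarrow> 'v monom \<Rightarrow> bool) \<Rightarrow> 'v monom \<Rightarrow> 'v monom \<Rightarrow> bool" where
  "perm_ord g ord a b = ord (monom_perm (inv g) a) (monom_perm (inv g) b)"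

lemma monom_perm_zero: "monom_perm \<sigma> 0 = 0"
  by (rule poly_mapping_eqI) (simp add: lookup_monom_perm)

lemma mo_zero: "monomial_order ord \<Longrightarrow> ord 0 m"
  unfolding monomial_order_def by (elim conjE) (erule allE, assumption)

lemma perm_ord_mo:
  assumes g: "bij g" and mo: "monomial_order ord"
  shows "monomial_order (perm_ord g ord)"
proof -
  have b: "bij (inv g)" using g by (rule bij_imp_bij_inv)
  have inj: "monom_perm (inv g) a = monom_perm (inv g) b \<Longrightarrow> a = b" for a b
  proof -
    assume "monom_perm (inv g) a = monom_perm (inv g) b"
    then have "monom_perm g (monom_perm (inv g) a) = monom_perm g (monom_perm (inv g) b)" by simp
    then show "a = b" by (simp add: monom_perm_inv1[OF g])
  qed
  have lin: "lin_ord ord" using monomial_order_lin[OF mo] .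
  have z: "ord 0 m" for m using mo_zero[OF mo] .
  show ?thesis
    unfolding monomial_order_def perm_ord_def
  proof (intro conjI allI impI)
    show "ord (monom_perm (inv g) m) (monom_perm (inv g) m)" for m using lin_refl[OF lin] .
    show "m = m'" if "ord (monom_perm (inv g) m) (monom_perm (inv g) m') \<and> ord (monom_perm (inv g) m') (monom_perm (inv g) m)" for m m'
      by (rule inj, rule lin_antisym[OF lin]) (use that in auto)
    show "ord (monom_perm (inv g) m) (monom_perm (inv g) m'')" if "ord (monom_perm (inv g) m) (monom_perm (inv g) m') \<and> ord (monom_perm (inv g) m') (monom_perm (inv g) m'')" for m m' m''
      using lin_trans[OF lin, of "monom_perm (inv g) m" "monom_perm (inv g) m'" "monom_perm (inv g) m''"] that by blast
    show "ord (monom_perm (inv g) m) (monom_perm (inv g) m') \<or> ord (monom_perm (inv g) m') (monom_perm (inv g) m)" for m m'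
      using lin_total[OF lin, of "monom_perm (inv g) m" "monom_perm (inv g) m'"] by blast
    show "ord (monom_perm (inv g) 0) (monom_perm (inv g) m)" for m
      using z by (simp add: monom_perm_zero)
    show "ord (monom_perm (inv g) (m + k)) (monom_perm (inv g) (m' + k))" if "ord (monom_perm (inv g) m) (monom_perm (inv g) m')" for m m' k
      using mo_compat[OF mo that] by (simp add: monom_perm_add)
  qed
qed

lemma lead_perm:
  assumes g: "bij g" and mo: "monomial_order ord" and h: "h \<noteq> 0"
    and keys: "pkeys h' = monom_perm g ` pkeys h"
  shows "lead_monom (perm_ord g ord) h' = monom_perm g (lead_monom ord h)"
proof -
  have lin: "lin_ord ord" using monomial_order_lin[OF mo] .
  have lin': "lin_ord (perm_ord g ord)" using monomial_order_lin[OF perm_ord_mo[OF g mo]] .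
  show ?thesis
  proof (rule lead_unique[OF lin'])
    show "monom_perm g (lead_monom ord h) \<in> pkeys h'" using keys lead_props(1)[OF lin h] by blast
    show "\<forall>m\<in>pkeys h'. perm_ord g ord m (monom_perm g (lead_monom ord h))"
      using keys lead_props(2)[OF lin h] by (auto simp: perm_ord_def monom_perm_inv2[OF g])
  qed
qed

lemma init_ideal_eq:
  fixes I :: "('v, 'k::field) mpoly set"
  shows "init_ideal ord I = ideal_gen (monom_poly ` (lead_monom ord ` (I - {0})))"
  unfolding init_ideal_def by (rule arg_cong[where f=ideal_gen]) auto

lemma monom_poly_mult: "(monom_poly a :: ('v, 'k::field) mpoly) * monom_poly b = monom_poly (a + b)"
  unfolding monom_poly_def by (simp add: mult_single)

lemma monom_in_ideal_gen:
  "(monom_poly u :: ('v, 'k::field) mpoly) \<in> ideal_gen (monom_poly ` T) \<longleftrightarrow> u \<in> mons T"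
  unfolding ideal_gen_monomial by simp

lemma card_lt_of_witness:
  assumes "finite Y" "X \<subseteq> Y" "u \<in> Y" "u \<notin> X"
  shows "card X < card Y"
  using assms by (metis psubset_card_mono psubsetI)

lemma witness_of_card_lt:
  assumes "X \<subseteq> Y" "card X < card Y"
  shows "\<exists>u\<in>Y. u \<notin> X"
proof (rule ccontr)
  assume "\<not> (\<exists>u\<in>Y. u \<notin> X)"
  then have "X = Y" using assms(1) by blast
  then show False using assms(2) by simp
qed

lemma nsm_Suc: "nsm (Suc n) x = x + nsm n x"
  unfolding nsm_def by simp

lemma nsm_0: "nsm 0 x = 0"
  unfolding nsm_def by simp

lemma grading_add: "P_grading degP \<Longrightarrow> degP (a + b) = degP a + degP b"
  unfolding P_grading_def by blast

lemma grading_fin: "P_grading degP \<Longrightarrow> finite {m. degP m = D}"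
  unfolding P_grading_def by blast

lemma grading_tdeg: "P_grading degP \<Longrightarrow> degP a = degP b \<Longrightarrow> tdeg a = tdeg b"
  unfolding P_grading_def by blast

theorem mainTheorem16:
  fixes degP :: "'v::finite monom \<Rightarrow> 'p::comm_monoid_add"
    and I Q :: "('v, 'k::field) mpoly set"
    and ord :: "'v monom \<Rightarrow> 'v monom \<Rightarrow> bool"
    and G :: "('v \<Rightarrow> 'v) set"
    and d m :: nat
    and e :: "nat \<Rightarrow> 'v"
  assumes grading: "P_grading degP"
    and I_ideal: "is_ideal I"
    and I_hom: "P_homogeneous degP I"
    and ord: "monomial_order ord"
    and G_group: "perm_group G"
    and G_mon: "acts_monomially G I d"
    and m_pos: "m \<ge> 1"
    and e_inj: "inj_on e {1..m}"
    and G_stable: "\<forall>g\<in>G. \<forall>i\<in>{1..m}. g (e i) \<in> e ` {1..m}"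
    and G_trans: "\<forall>i\<in>{1..m}. \<forall>j\<in>{1..m}. \<exists>g\<in>G. g (e i) = e j"
    and Q_gen: "\<exists>S. (\<forall>s\<in>S. tdeg s \<le> d) \<and> Q = ideal_gen (monom_poly ` S)"
    and Q_sub: "Q \<subseteq> init_ideal ord I"
    and nzd: "\<forall>f. monom_poly (var_monom (e 1)) * f \<in> Q \<longrightarrow> f \<in> Q"
    and HS_eq: "\<forall>g\<in>G. HS_quot degP Q = HS_quot degP (poly_perm g ` Q)"
    and dims: "\<forall>D. \<exists>a :: nat \<Rightarrow> nat.
        kdim (graded_piece degP Q (D + (\<Sum>i\<in>{1..m}. nsm (a i) (degP (var_monom (e i))))))
      = kdim (graded_piece degP I (D + (\<Sum>i\<in>{1..m}. nsm (a i) (degP (var_monom (e i))))))"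
  shows "Q = init_ideal ord I"
proof -
  have lin: "lin_ord ord" using monomial_order_lin[OF ord] .
  obtain S where S: "\<forall>s\<in>S. tdeg s \<le> d" and QS: "Q = ideal_gen (monom_poly ` S)"
    using Q_gen by blast
  define L0 where "L0 = lead_monom ord ` (I - {0})"
  define Lg where "Lg = (\<lambda>g. lead_monom (perm_ord g ord) ` (I - {0}))"
  define B where "B = (\<lambda>g. {m. monom_perm (inv g) m \<in> mons S})"
  define dg where "dg = (\<lambda>D. {m. degP m = D})"
  have fin: "finite (dg D)" for D unfolding dg_def using grading_fin[OF grading] .
  have bijG: "bij g" if "g \<in> G" for g using G_group that unfolding perm_group_def by blast
  have init: "init_ideal ord I = ideal_gen (monom_poly ` L0)" unfolding L0_def by (rule init_ideal_eq)
  have F1: "kdim (graded_piece degP Q D) = card (mons S \<inter> dg D)" for D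
    unfolding QS graded_piece_monomial dg_def by (rule kdim_keys[OF lin]) (use fin in \<open>simp add: dg_def\<close>)
  have F3: "kdim (graded_piece degP (UNIV :: ('v, 'k) mpoly set) D) = card (dg D)" for D
    unfolding graded_piece_UNIV dg_def by (rule kdim_keys[OF lin]) (use fin in \<open>simp add: dg_def\<close>)
  have F2: "kdim (graded_piece degP (poly_perm g ` Q) D) = card (B g \<inter> dg D)" if g: "g \<in> G" for g D
  proof -
    have "graded_piece degP (poly_perm g ` Q) D = {f. pkeys f \<subseteq> B g \<inter> dg D}"
      unfolding QS poly_perm_image_monomial[OF bijG[OF g]] graded_piece_def B_def dg_def by auto
    then show ?thesis using kdim_keys[OF lin, of "B g \<inter> dg D"] fin by simp
  qed
  have F4: "card (mons S \<inter> dg D) = card (B g \<inter> dg D)" if g: "g \<in> G" for g D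
  proof -
    have "HS_quot degP Q D = HS_quot degP (poly_perm g ` Q) D" using HS_eq g by simp
    then have "card (dg D) - card (mons S \<inter> dg D) = card (dg D) - card (B g \<inter> dg D)"
      unfolding HS_quot_def F1 F2[OF g] F3 .
    moreover have "card (mons S \<inter> dg D) \<le> card (dg D)" using fin by (intro card_mono) auto
    moreover have "card (B g \<inter> dg D) \<le> card (dg D)" using fin by (intro card_mono) auto
    ultimately show ?thesis by linarith
  qed
  have F5: "kdim (graded_piece degP I D) = card (mons (Lg g) \<inter> dg D)" if g: "g \<in> G" for g D
    unfolding Lg_def dg_def by (rule kdim_ideal[OF grading perm_ord_mo[OF bijG[OF g] ord] I_ideal I_hom])
  have F5': "kdim (graded_piece degP I D) = card (mons L0 \<inter> dg D)" for D
    unfolding L0_def dg_def by (rule kdim_ideal[OF grading ord I_ideal I_hom])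
  have SL0: "mons S \<subseteq> mons L0"
  proof
    fix u assume "u \<in> mons S"
    then have "(monom_poly u :: ('v, 'k) mpoly) \<in> Q" unfolding QS monom_in_ideal_gen .
    then have "(monom_poly u :: ('v, 'k) mpoly) \<in> ideal_gen (monom_poly ` L0)" using Q_sub init by auto
    then show "u \<in> mons L0" unfolding monom_in_ideal_gen .
  qed
  have F6: "B g \<subseteq> mons (Lg g)" if g: "g \<in> G" for g
  proof
    fix m' assume "m' \<in> B g"
    then have s': "monom_perm (inv g) m' \<in> mons S" unfolding B_def by simp
    then obtain s k where sk: "s \<in> S" "monom_perm (inv g) m' = s + k" unfolding mons_def by blast
    have "s \<in> mons L0" using SL0 mons_self[OF sk(1)] by blast
    then obtain h where h: "h \<in> I" "h \<noteq> 0" "lead_monom ord h = s" "\<forall>m\<in>pkeys h. degP m = degP s"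
      using lift_lead[OF ord I_ideal I_hom] unfolding L0_def by blast
    have "\<forall>m\<in>pkeys h. tdeg m \<le> d"
    proof
      fix m assume "m \<in> pkeys h"
      then have "tdeg m = tdeg s" using h(4) grading_tdeg[OF grading] by blast
      then show "tdeg m \<le> d" using S sk(1) by simp
    qed
    then obtain h' where h': "h' \<in> I" "pkeys h' = pkeys (poly_perm g h)"
      using G_mon h(1) g unfolding acts_monomially_def by blast
    have kh': "pkeys h' = monom_perm g ` pkeys h" using h'(2) keys_poly_perm[OF bijG[OF g]] by simp
    have "h' \<noteq> 0"
    proof
      assume "h' = 0"
      then have "monom_perm g ` pkeys h = {}" using kh' by simp
      then show False using h(2) by simp
    qed
    moreover have "lead_monom (perm_ord g ord) h' = monom_perm g s"
      using lead_perm[OF bijG[OF g] ord h(2) kh'] h(3) by simp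
    ultimately have "monom_perm g s \<in> Lg g" unfolding Lg_def using h'(1)
      by (intro rev_image_eqI[of h']) auto
    then have "monom_perm g s + monom_perm g k \<in> mons (Lg g)" by (intro mons_add mons_self)
    moreover have "m' = monom_perm g s + monom_perm g k"
      using monom_perm_inv1[OF bijG[OF g], of m'] sk(2) monom_perm_add[of g s k] by simp
    ultimately show "m' \<in> mons (Lg g)" by simp
  qed
  have nzdS: "w \<in> mons S" if "var_monom (e 1) + w \<in> mons S" for w
  proof -
    have "(monom_poly (var_monom (e 1)) :: ('v, 'k) mpoly) * monom_poly w \<in> Q"
      unfolding monom_poly_mult QS monom_in_ideal_gen using that .
    then have "(monom_poly w :: ('v, 'k) mpoly) \<in> Q" using nzd by blast
    then show ?thesis unfolding QS monom_in_ideal_gen .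
  qed
  have F7: "u \<in> B g" if g: "g \<in> G" and u: "u + var_monom (g (e 1)) \<in> B g" for g u
  proof -
    have bi: "bij (inv g)" using bij_imp_bij_inv[OF bijG[OF g]] .
    have "inv g (g (e 1)) = e 1" using bijG[OF g] by (simp add: bij_is_inj inv_f_f)
    then have "monom_perm (inv g) (u + var_monom (g (e 1))) = var_monom (e 1) + monom_perm (inv g) u"
      by (simp add: monom_perm_add monom_perm_var[OF bi] add.commute)
    then have "var_monom (e 1) + monom_perm (inv g) u \<in> mons S" using u unfolding B_def by simp
    then show ?thesis using nzdS unfolding B_def by simp
  qed
  have step: "kdim (graded_piece degP Q (D + degP (var_monom (e i)))) < kdim (graded_piece degP I (D + degP (var_monom (e i))))"
    if i: "i \<in> {1..m}" and lt: "kdim (graded_piece degP Q D) < kdim (graded_piece degP I D)" for i D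
  proof -
    have "1 \<in> {1..m}" using m_pos by simp
    then obtain g where g: "g \<in> G" "g (e 1) = e i" using G_trans i by blast
    have "card (B g \<inter> dg D) < card (mons (Lg g) \<inter> dg D)"
      using lt unfolding F1 F4[OF g(1)] F5[OF g(1)] .
    moreover have "B g \<inter> dg D \<subseteq> mons (Lg g) \<inter> dg D" using F6[OF g(1)] by blast
    ultimately obtain u where u: "u \<in> mons (Lg g) \<inter> dg D" "u \<notin> B g \<inter> dg D"
      using witness_of_card_lt by blast
    define u' where "u' = u + var_monom (e i)"
    have "u' \<in> mons (Lg g)" unfolding u'_def using u(1) mons_add by blast
    moreover have "degP u' = D + degP (var_monom (e i))"
      unfolding u'_def grading_add[OF grading] using u(1) unfolding dg_def by simp
    ultimately have u'1: "u' \<in> mons (Lg g) \<inter> dg (D + degP (var_monom (e i)))" unfolding dg_def by simp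
    have "u \<notin> B g" using u unfolding dg_def by simp
    then have u'2: "u' \<notin> B g \<inter> dg (D + degP (var_monom (e i)))"
      using F7[OF g(1), of u] g(2) unfolding u'_def by auto
    have "card (B g \<inter> dg (D + degP (var_monom (e i)))) < card (mons (Lg g) \<inter> dg (D + degP (var_monom (e i))))"
      by (rule card_lt_of_witness[OF _ _ u'1 u'2]) (use fin F6[OF g(1)] in auto)
    then show ?thesis unfolding F1 F4[OF g(1)] F5[OF g(1)] .
  qed
  have iter: "kdim (graded_piece degP Q (D + nsm n (degP (var_monom (e i))))) < kdim (graded_piece degP I (D + nsm n (degP (var_monom (e i)))))"
    if i: "i \<in> {1..m}" and lt: "kdim (graded_piece degP Q D) < kdim (graded_piece degP I D)" for i D n
  proof (induction n)
    case 0 then show ?case using lt by (simp add: nsm_0)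
  next
    case (Suc n)
    have "D + nsm (Suc n) (degP (var_monom (e i))) = (D + nsm n (degP (var_monom (e i)))) + degP (var_monom (e i))"
      by (simp add: nsm_Suc ac_simps)
    then show ?case using step[OF i Suc.IH] by simp
  qed
  have multi: "kdim (graded_piece degP Q (D + (\<Sum>i\<in>A. nsm (a i) (degP (var_monom (e i)))))) < kdim (graded_piece degP I (D + (\<Sum>i\<in>A. nsm (a i) (degP (var_monom (e i))))))"
    if A: "A \<subseteq> {1..m}" and lt: "kdim (graded_piece degP Q D) < kdim (graded_piece degP I D)" for A a D
  proof -
    have "finite A" using A finite_subset by blast
    then show ?thesis using A
    proof (induction A rule: finite_induct)
      case empty then show ?case using lt by simp
    next
      case (insert j A)
      have j: "j \<in> {1..m}" using insert.prems by blast
      have IH: "kdim (graded_piece degP Q (D + (\<Sum>i\<in>A. nsm (a i) (degP (var_monom (e i)))))) < kdim (graded_piece degP I (D + (\<Sum>i\<in>A. nsm (a i) (degP (var_monom (e i))))))"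
        using insert.IH insert.prems by blast
      have "D + (\<Sum>i\<in>insert j A. nsm (a i) (degP (var_monom (e i)))) = (D + (\<Sum>i\<in>A. nsm (a i) (degP (var_monom (e i))))) + nsm (a j) (degP (var_monom (e j)))"
        using insert.hyps by (simp add: ac_simps)
      then show ?case using iter[OF j IH, of "a j"] by simp
    qed
  qed
  show ?thesis
  proof (rule ccontr)
    assume neq: "Q \<noteq> init_ideal ord I"
    have "mons S \<noteq> mons L0"
    proof
      assume "mons S = mons L0"
      then have "Q = init_ideal ord I" unfolding QS init ideal_gen_monomial by simp
      then show False using neq by simp
    qed
    then obtain u where u: "u \<in> mons L0" "u \<notin> mons S" using SL0 by blast
    define D where "D = degP u"
    have "card (mons S \<inter> dg D) < card (mons L0 \<inter> dg D)"
      by (rule card_lt_of_witness[of _ _ u]) (use fin SL0 u in \<open>auto simp: D_def dg_def\<close>)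
    then have lt: "kdim (graded_piece degP Q D) < kdim (graded_piece degP I D)"
      unfolding F1 F5' .
    obtain a :: "nat \<Rightarrow> nat" where
      "kdim (graded_piece degP Q (D + (\<Sum>i\<in>{1..m}. nsm (a i) (degP (var_monom (e i))))))
      = kdim (graded_piece degP I (D + (\<Sum>i\<in>{1..m}. nsm (a i) (degP (var_monom (e i))))))"
      using dims by blast
    then show False using multi[OF subset_refl lt, of a] by simp
  qed
qed

end
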